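(* Let $k$ be even, $d\ge1$, $\ell\ge1$, $n\ge1$, $p\in[0,1]$, and let $\Phi$ be a random $k$-XOR instance with probability $p$. Then $$\mathbb{E}\,\mathrm{tr}\big((R^{\Phi,d})^{2\ell}\big)\le\frac{1}{((kd/2)!)^{2\ell}}\sum_{\mathcal{Q}\text{ even}}\Big[\big(p\,(kd/2)^{k/2}\big)^{|\mathcal{Q}|}\sum_{\{I_j\}\ \mathcal{Q}\text{-valid}}\ \prod_{j=1}^{2\ell}\mathrm{hist}(I_j)!\Big],$$ where the outer sum is over all even partitions $\mathcal{Q}$ of $\mathcal{I}=\{(j,s):j\in[2\ell],s\in[d]\}$ and the inner sum over all $\mathcal{Q}$-valid collections $\{I_j\}_{j=1}^{2\ell}$ of tuples in $[n]^{kd/2}$.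
   Context: Random $k$-XOR with probability $p$: each of the $n^k$ tuples $S\in[n]^k$ is independently included with probability $p$; for each included $S=(s_1,\dots,s_k)$ a constraint $\prod_{i=1}^k x_{s_i}=\eta_S$ is added, with $\eta_S$ i.i.d. uniform in $\{\pm1\}$. The constraint tensor $T$ has $T_S=\eta_S$ if $S$ is included and $T_S=0$ otherwise. $M^\Phi$ is the $n^{k/2}\times n^{k/2}$ matrix with rows/columns indexed by $[n]^{k/2}$ and $M^\Phi_{U,V}=T_{(U,V)}$ ($(U,V)$ the concatenation). $S^\Phi=\frac12(M^\Phi+(M^\Phi)^\top)$. For $d\ge1$, $S^{\Phi,d}$ has rows/columns indexed by $[n]^{kd/2}$, each tuple written as a concatenation $(U_1,\dots,U_d)$ of blocks in $[n]^{k/2}$, and $S^{\Phi,d}_{(U_1,\dots,U_d),(V_1,\dots,V_d)}=\prod_{s=1}^dS^\Phi_{U_s,V_s}$. For $I=(i_1,\dots,i_q)$ and $\pi\in\mathbb{S}_q$ (permutations of $[q]$), $\pi(I)=(i_{\pi(1)},\dots,i_{\pi(q)})$. Then $R^{\Phi,d}_{I,J}=\frac{1}{((kd/2)!)^2}\sum_{\pi,\sigma\in\mathbb{S}_{kd/2}}S^{\Phi,d}_{\pi(I),\sigma(J)}$. $\mathrm{hist}(I)=(\alpha_1,\dots,\alpha_n)$ with $\alpha_i$ the number of occurrences of $i$ in $I$; $\mathrm{hist}(I)!=\prod_i\alpha_i!$. Given $I_1,\dots,I_{2\ell}\in[n]^{kd/2}$ (indices modulo $2\ell$) and $\pi_j,\sigma_j\in\mathbb{S}_{kd/2}$,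 let $A_{j,s}$ be the $s$-th block of $\pi_j(I_j)$ and $B_{j,s}$ the $s$-th block of $\sigma_j(I_{j+1})$. $\mathrm{Par}(\{I_j\},\{\pi_j\},\{\sigma_j\})$ is the partition of $\mathcal{I}$ into classes of the relation $(j,s)\sim(j',s')$ iff $(A_{j,s},B_{j,s})=(A_{j',s'},B_{j',s'})$ or $=(B_{j',s'},A_{j',s'})$; $|\mathcal{Q}|$ denotes the number of classes. A partition is even if all classes have even size. $\{I_j\}$ is $\mathcal{Q}$-valid if there exist $\{\sigma_j\}$ with $\mathrm{Par}(\{I_j\},\{\mathrm{id}\},\{\sigma_j\})=\mathcal{Q}$ ($\{\mathrm{id}\}$: all $\pi_j$ identity). *)

theory Defs
  imports "HOL-Probability.Probability" "HOL-Combinatorics.Permutations" "HOL-Library.Disjoint_Sets"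
begin

text \<open>Tuples in [n]^m, with [n] rendered as {0..<n}; tuples are lists of length m.\<close>
definition tuples :: "nat \<Rightarrow> nat \<Rightarrow> nat list set" where
  "tuples n m = {I. length I = m \<and> set I \<subseteq> {..<n}}"

text \<open>Distribution of one entry T_S: 0 if S is not included (prob 1-p),
  otherwise a uniform sign eta_S.\<close>
definition entry_pmf :: "real \<Rightarrow> real pmf" where
  "entry_pmf p = bind_pmf (bernoulli_pmf p)
     (\<lambda>b. if b then map_pmf (\<lambda>c. if c then 1 else -1) (bernoulli_pmf (1/2)) else return_pmf 0)"

text \<open>The random constraint tensor T of a random k-XOR instance with probability p
  (independent entries over all tuples in [n]^k; value 0 outside [n]^k).\<close>
definition kxor_pmf :: "nat \<Rightarrow> nat \<Rightarrow> real \<Rightarrow> (nat list \<Rightarrow> real) pmf" where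
  "kxor_pmf n k p = Pi_pmf (tuples n k) 0 (\<lambda>_. entry_pmf p)"

text \<open>S^Phi_{U,V} = (M_{U,V} + M_{V,U})/2 with M_{U,V} = T_{(U,V)}.\<close>
definition S_phi :: "(nat list \<Rightarrow> real) \<Rightarrow> nat list \<Rightarrow> nat list \<Rightarrow> real" where
  "S_phi T U V = (T (U @ V) + T (V @ U)) / 2"

text \<open>The s-th block (0-based) of size h of a tuple.\<close>
definition block :: "nat \<Rightarrow> nat list \<Rightarrow> nat \<Rightarrow> nat list" where
  "block h X s = take h (drop (s * h) X)"

definition S_phi_d :: "nat \<Rightarrow> nat \<Rightarrow> (nat list \<Rightarrow> real) \<Rightarrow> nat list \<Rightarrow> nat list \<Rightarrow> real" where
  "S_phi_d k d T I J = (\<Prod>s<d. S_phi T (block (k div 2) I s) (block (k div 2) J s))"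

text \<open>pi(I) = (i_{pi(1)},...,i_{pi(q)}), 0-based: pi permutes {0..<q}.\<close>
definition apply_perm :: "(nat \<Rightarrow> nat) \<Rightarrow> nat list \<Rightarrow> nat list" where
  "apply_perm \<pi> I = map (\<lambda>t. I ! \<pi> t) [0..<length I]"

definition R_phi_d :: "nat \<Rightarrow> nat \<Rightarrow> (nat list \<Rightarrow> real) \<Rightarrow> nat list \<Rightarrow> nat list \<Rightarrow> real" where
  "R_phi_d k d T I J =
     (1 / (fact (k * d div 2))\<^sup>2) *
     (\<Sum>\<pi>\<in>{\<pi>. \<pi> permutes {..<k * d div 2}}. \<Sum>\<sigma>\<in>{\<sigma>. \<sigma> permutes {..<k * d div 2}}.
        S_phi_d k d T (apply_perm \<pi> I) (apply_perm \<sigma> J))"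

definition mat_mult :: "'i set \<Rightarrow> ('i \<Rightarrow> 'i \<Rightarrow> real) \<Rightarrow> ('i \<Rightarrow> 'i \<Rightarrow> real) \<Rightarrow> ('i \<Rightarrow> 'i \<Rightarrow> real)" where
  "mat_mult A X Y = (\<lambda>i j. \<Sum>t\<in>A. X i t * Y t j)"

fun mat_pow :: "'i set \<Rightarrow> ('i \<Rightarrow> 'i \<Rightarrow> real) \<Rightarrow> nat \<Rightarrow> ('i \<Rightarrow> 'i \<Rightarrow> real)" where
  "mat_pow A X 0 = (\<lambda>i j. if i = j then 1 else 0)"
| "mat_pow A X (Suc m) = mat_mult A (mat_pow A X m) X"

definition mat_trace :: "'i set \<Rightarrow> ('i \<Rightarrow> 'i \<Rightarrow> real) \<Rightarrow> real" where
  "mat_trace A X = (\<Sum>i\<in>A. X i i)"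

text \<open>The index set I = {(j,s)}, 0-based: j < 2l, s < d.\<close>
definition idx :: "nat \<Rightarrow> nat \<Rightarrow> (nat \<times> nat) set" where
  "idx d l = {..<2 * l} \<times> {..<d}"

definition par_rel :: "nat \<Rightarrow> nat \<Rightarrow> nat \<Rightarrow> (nat \<Rightarrow> nat list) \<Rightarrow> (nat \<Rightarrow> nat \<Rightarrow> nat)
    \<Rightarrow> (nat \<Rightarrow> nat \<Rightarrow> nat) \<Rightarrow> ((nat \<times> nat) \<times> (nat \<times> nat)) set" where
  "par_rel k d l Is pis sigmas =
     (let A = (\<lambda>(j, s). block (k div 2) (apply_perm (pis j) (Is j)) s);
          B = (\<lambda>(j, s). block (k div 2) (apply_perm (sigmas j) (Is ((j + 1) mod (2 * l)))) s)
      in {(x, y). x \<in> idx d l \<and> y \<in> idx d l \<and>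
                  ((A x, B x) = (A y, B y) \<or> (A x, B x) = (B y, A y))})"

definition Par :: "nat \<Rightarrow> nat \<Rightarrow> nat \<Rightarrow> (nat \<Rightarrow> nat list) \<Rightarrow> (nat \<Rightarrow> nat \<Rightarrow> nat)
    \<Rightarrow> (nat \<Rightarrow> nat \<Rightarrow> nat) \<Rightarrow> (nat \<times> nat) set set" where
  "Par k d l Is pis sigmas = idx d l // par_rel k d l Is pis sigmas"

definition Q_valid :: "nat \<Rightarrow> nat \<Rightarrow> nat \<Rightarrow> (nat \<times> nat) set set \<Rightarrow> (nat \<Rightarrow> nat list) \<Rightarrow> bool" where
  "Q_valid k d l Q Is \<longleftrightarrow>
     (\<exists>sigmas. (\<forall>j<2 * l. sigmas j permutes {..<k * d div 2}) \<and> Par k d l Is (\<lambda>_. id) sigmas = Q)"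

definition even_partitions :: "nat \<Rightarrow> nat \<Rightarrow> (nat \<times> nat) set set set" where
  "even_partitions d l = {Q. partition_on (idx d l) Q \<and> (\<forall>C\<in>Q. even (card C))}"

text \<open>hist(I)! = prod_i alpha_i!.\<close>
definition hist_fact :: "nat \<Rightarrow> nat list \<Rightarrow> real" where
  "hist_fact n I = (\<Prod>i<n. fact (count_list I i))"

end

theory Submission
  imports Defs
begin



lemma finite_tuples: "finite (tuples n m)"
proof -
  have "tuples n m = {xs. set xs \<subseteq> {..<n} \<and> length xs = m}" by (auto simp: tuples_def)
  then show ?thesis by (simp add: finite_lists_length_eq)
qed

lemma length_apply_perm[simp]: "length (apply_perm \<pi> I) = length I"
  by (simp add: apply_perm_def)

lemma apply_perm_id[simp]: "apply_perm id I = I"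
  by (simp add: apply_perm_def map_nth)

lemma nth_apply_perm: "t < length I \<Longrightarrow> apply_perm \<pi> I ! t = I ! \<pi> t"
  by (simp add: apply_perm_def)

lemma apply_perm_comp:
  assumes "\<tau> permutes {..<length I}"
  shows "apply_perm \<tau> (apply_perm \<pi> I) = apply_perm (\<pi> \<circ> \<tau>) I"
proof -
  have "\<tau> t < length I" if "t < length I" for t
    using permutes_in_image[OF assms, of t] that by auto
  then show ?thesis by (auto simp: apply_perm_def intro!: nth_equalityI)
qed

lemma set_apply_perm:
  assumes "\<pi> permutes {..<length I}"
  shows "set (apply_perm \<pi> I) \<subseteq> set I"
proof -
  have "\<pi> t < length I" if "t < length I" for t
    using permutes_in_image[OF assms, of t] that by auto
  then show ?thesis by (auto simp: apply_perm_def)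
qed

lemma apply_perm_tuples:
  assumes "I \<in> tuples n m" "\<pi> permutes {..<m}"
  shows "apply_perm \<pi> I \<in> tuples n m"
  using assms set_apply_perm[of \<pi> I] by (auto simp: tuples_def)

lemma apply_perm_inv1:
  assumes "\<pi> permutes {..<length I}"
  shows "apply_perm (inv \<pi>) (apply_perm \<pi> I) = I"
  using assms by (simp add: apply_perm_comp permutes_inv permutes_inv_o)

lemma apply_perm_inv2:
  assumes "\<pi> permutes {..<length I}"
  shows "apply_perm \<pi> (apply_perm (inv \<pi>) I) = I"
  using assms by (simp add: apply_perm_comp permutes_inv permutes_inv_o)

lemma block_tuples:
  assumes "X \<in> tuples n m" "m = h * d" "s < d"
  shows "block h X s \<in> tuples n h"
proof -
  have "s * h + h \<le> h * d" using assms(3)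
    by (metis add.commute mult.commute mult_Suc_right mult_le_mono2 Suc_leI)
  then show ?thesis using assms set_take_subset[of h "drop (s*h) X"] set_drop_subset[of "s*h" X]
    by (auto simp: block_def tuples_def)
qed

lemma concat_blocks:
  "length X = h * d \<Longrightarrow> concat (map (\<lambda>s. block h X s) [0..<d]) = X"
proof (induction d arbitrary: X)
  case 0
  then show ?case by simp
next
  case (Suc d)
  have "concat (map (\<lambda>s. block h (take (h * d) X) s) [0..<d]) = take (h * d) X"
    using Suc by (intro Suc.IH) simp
  moreover have "block h (take (h * d) X) s = block h X s" if "s < d" for s
  proof -
    have "s * h + h \<le> h * d" using that
      by (metis add.commute mult.commute mult_Suc_right mult_le_mono2 Suc_leI)
    then show ?thesis by (simp add: block_def take_drop min_def algebra_simps)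
  qed
  ultimately have "concat (map (\<lambda>s. block h X s) [0..<d]) = take (h * d) X"
    by (metis (no_types, lifting) atLeastLessThan_iff map_eq_conv set_upt)
  then have "concat (map (\<lambda>s. block h X s) [0..<Suc d]) = take (h * d) X @ take h (drop (d * h) X)"
    by (simp add: block_def)
  also have "\<dots> = X" using Suc.prems by (simp add: mult.commute take_add[symmetric])
  finally show ?case .
qed





lemma stab_bound:
  assumes I: "set I \<subseteq> {..<n}"
  shows "real (card {\<sigma>. \<sigma> permutes {..<length I} \<and> apply_perm \<sigma> I = Y}) \<le> hist_fact n I"
proof -
  define m where "m = length I"
  define F where "F i = {u. u < m \<and> I ! u = i}" for i
  define Stab where "Stab = {\<tau>. \<tau> permutes {..<m} \<and> (\<forall>u<m. I ! (\<tau> u) = I ! u)}"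
  have fP: "finite {\<tau>. \<tau> permutes {..<m}}" by (rule finite_permutations) simp
  have fStab: "finite Stab" by (rule finite_subset[OF _ fP]) (auto simp: Stab_def)
  have step1: "card {\<sigma>. \<sigma> permutes {..<m} \<and> apply_perm \<sigma> I = Y} \<le> card Stab"
  proof (cases "{\<sigma>. \<sigma> permutes {..<m} \<and> apply_perm \<sigma> I = Y} = {}")
    case True
    then show ?thesis by (simp only: card.empty)
  next
    case False
    then obtain \<sigma>0 where s0: "\<sigma>0 permutes {..<m}" "apply_perm \<sigma>0 I = Y" by auto
    show ?thesis
    proof (rule card_inj_on_le[OF _ _ fStab])
      show "inj_on (\<lambda>\<sigma>. \<sigma> \<circ> inv \<sigma>0) {\<sigma>. \<sigma> permutes {..<m} \<and> apply_perm \<sigma> I = Y}"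
      proof (rule inj_onI)
        fix \<sigma> \<sigma>' :: "nat \<Rightarrow> nat" assume "\<sigma> \<circ> inv \<sigma>0 = \<sigma>' \<circ> inv \<sigma>0"
        then have "\<sigma> \<circ> inv \<sigma>0 \<circ> \<sigma>0 = \<sigma>' \<circ> inv \<sigma>0 \<circ> \<sigma>0" by simp
        then show "\<sigma> = \<sigma>'" by (simp add: o_assoc[symmetric] permutes_inv_o[OF s0(1)])
      qed
      show "(\<lambda>\<sigma>. \<sigma> \<circ> inv \<sigma>0) ` {\<sigma>. \<sigma> permutes {..<m} \<and> apply_perm \<sigma> I = Y} \<subseteq> Stab"
      proof (rule image_subsetI)
        fix \<sigma> :: "nat \<Rightarrow> nat" assume "\<sigma> \<in> {\<sigma>. \<sigma> permutes {..<m} \<and> apply_perm \<sigma> I = Y}"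
        then have s: "\<sigma> permutes {..<m}" "apply_perm \<sigma> I = Y" by auto
        have eqn: "I ! (\<sigma> t) = I ! (\<sigma>0 t)" if "t < m" for t
          using arg_cong[OF trans[OF s(2) s0(2)[symmetric]], of "\<lambda>L. L ! t"] that
          by (simp add: nth_apply_perm m_def)
        show "\<sigma> \<circ> inv \<sigma>0 \<in> Stab" unfolding Stab_def
        proof safe
          show "\<sigma> \<circ> inv \<sigma>0 permutes {..<m}" by (rule permutes_compose[OF permutes_inv[OF s0(1)] s(1)])
          fix u assume u: "u < m"
          have "inv \<sigma>0 u < m" using permutes_in_image[OF permutes_inv[OF s0(1)], of u] u by simp
          then show "I ! ((\<sigma> \<circ> inv \<sigma>0) u) = I ! u"
            using eqn[of "inv \<sigma>0 u"] by (simp add: permutes_inverses[OF s0(1)])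
        qed
      qed
    qed
  qed
  have fF: "finite (F i)" for i by (simp add: F_def)
  have step2: "card Stab \<le> card (PiE {..<n} (\<lambda>i. {\<pi>. \<pi> permutes F i}))"
  proof (rule card_inj_on_le[where f = "\<lambda>\<tau>. \<lambda>i\<in>{..<n}. (\<lambda>u. if u \<in> F i then \<tau> u else u)"])
    show "finite (PiE {..<n} (\<lambda>i. {\<pi>. \<pi> permutes F i}))"
      by (intro finite_PiE finite_permutations fF) simp
    show "inj_on (\<lambda>\<tau>. \<lambda>i\<in>{..<n}. (\<lambda>u. if u \<in> F i then \<tau> u else u)) Stab"
    proof (rule inj_onI)
      fix \<tau> \<tau>' assume st: "\<tau> \<in> Stab" "\<tau>' \<in> Stab"
        and eq: "(\<lambda>i\<in>{..<n}. (\<lambda>u. if u \<in> F i then \<tau> u else u)) = (\<lambda>i\<in>{..<n}. (\<lambda>u. if u \<in> F i then \<tau>' u else u))"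
      show "\<tau> = \<tau>'"
      proof
        fix u
        show "\<tau> u = \<tau>' u"
        proof (cases "u < m")
          case True
          have "I ! u \<in> set I" using True by (simp add: m_def)
          then have "I ! u < n" using I by blast
          moreover have "u \<in> F (I ! u)" using True by (simp add: F_def)
          ultimately show ?thesis using fun_cong[OF fun_cong[OF eq, of "I ! u"], of u] by simp
        next
          case False
          then show ?thesis using st by (auto simp: Stab_def permutes_def)
        qed
      qed
    qed
    show "(\<lambda>\<tau>. \<lambda>i\<in>{..<n}. (\<lambda>u. if u \<in> F i then \<tau> u else u)) ` Stab \<subseteq> PiE {..<n} (\<lambda>i. {\<pi>. \<pi> permutes F i})"
    proof (rule image_subsetI)
      fix \<tau> :: "nat \<Rightarrow> nat" assume st: "\<tau> \<in> Stab"
      have tp: "\<tau> permutes {..<m}" and tI: "\<forall>u<m. I ! (\<tau> u) = I ! u" using st by (auto simp: Stab_def)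
      have "(\<lambda>u. if u \<in> F i then \<tau> u else u) permutes F i" for i
      proof (rule bij_imp_permutes)
        show "bij_betw (\<lambda>u. if u \<in> F i then \<tau> u else u) (F i) (F i)"
        proof (rule bij_betw_imageI)
          show "inj_on (\<lambda>u. if u \<in> F i then \<tau> u else u) (F i)"
            using permutes_inj[OF tp] by (auto simp: inj_on_def inj_def)
          show "(\<lambda>u. if u \<in> F i then \<tau> u else u) ` F i = F i"
          proof safe
            fix u assume "u \<in> F i"
            then show "(if u \<in> F i then \<tau> u else u) \<in> F i"
              using tI permutes_in_image[OF tp, of u] by (auto simp: F_def)
          next
            fix y assume y: "y \<in> F i"
            have "inv \<tau> y < m" using permutes_in_image[OF permutes_inv[OF tp], of y] y by (simp add: F_def)
            moreover have "I ! inv \<tau> y = i"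
              using tI \<open>inv \<tau> y < m\<close> y by (metis (mono_tags, lifting) F_def mem_Collect_eq permutes_inverses(1)[OF tp])
            ultimately have "inv \<tau> y \<in> F i" by (simp add: F_def)
            then show "y \<in> (\<lambda>u. if u \<in> F i then \<tau> u else u) ` F i"
              by (intro image_eqI[of _ _ "inv \<tau> y"]) (simp_all add: permutes_inverses[OF tp])
          qed
        qed
      qed simp
      then show "(\<lambda>i\<in>{..<n}. (\<lambda>u. if u \<in> F i then \<tau> u else u)) \<in> PiE {..<n} (\<lambda>i. {\<pi>. \<pi> permutes F i})"
        unfolding restrict_PiE_iff using \<open>\<And>i. _ permutes F i\<close> by simp
    qed
  qed
  have cardF: "card (F i) = count_list I i" for i
    by (simp add: F_def m_def count_list_eq_length_filter length_filter_conv_card eq_commute)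
  have "card (PiE {..<n} (\<lambda>i. {\<pi>. \<pi> permutes F i})) = (\<Prod>i<n. fact (count_list I i))"
    by (simp add: card_PiE card_permutations fF cardF)
  then have "real (card Stab) \<le> real (\<Prod>i<n. fact (count_list I i) :: nat)"
    using step2 by (simp only: of_nat_le_iff)
  also have "\<dots> = hist_fact n I" unfolding hist_fact_def by (simp add: of_nat_prod)
  finally have "real (card Stab) \<le> hist_fact n I" .
  then show ?thesis using step1 by (simp add: m_def)
qed


lemma quotient_key:
  "X // {(x, y). x \<in> X \<and> y \<in> X \<and> f x = f y} = (\<lambda>x. {y\<in>X. f y = f x}) ` X"
  unfolding quotient_def Image_def by (auto simp: eq_commute)

lemma equiv_key: "equiv X {(x, y). x \<in> X \<and> y \<in> X \<and> f x = f y}"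
  by (auto simp: equiv_def refl_on_def sym_def trans_def)

lemma card_quotient_key:
  assumes "finite X"
  shows "card (X // {(x, y). x \<in> X \<and> y \<in> X \<and> f x = f y}) = card (f ` X)"
proof -
  have "(\<lambda>x. {y\<in>X. f y = f x}) ` X = (\<lambda>v. {y\<in>X. f y = v}) ` (f ` X)" by auto
  moreover have "inj_on (\<lambda>v. {y\<in>X. f y = v}) (f ` X)"
    by (auto simp: inj_on_def)
  ultimately show ?thesis by (simp add: quotient_key card_image)
qed

definition PA :: "nat \<Rightarrow> (nat \<Rightarrow> nat list) \<Rightarrow> (nat \<Rightarrow> nat \<Rightarrow> nat) \<Rightarrow> nat \<times> nat \<Rightarrow> nat list" where
  "PA k Is pis x = block (k div 2) (apply_perm (pis (fst x)) (Is (fst x))) (snd x)"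

definition PB :: "nat \<Rightarrow> nat \<Rightarrow> (nat \<Rightarrow> nat list) \<Rightarrow> (nat \<Rightarrow> nat \<Rightarrow> nat) \<Rightarrow> nat \<times> nat \<Rightarrow> nat list" where
  "PB k l Is sigmas x = block (k div 2) (apply_perm (sigmas (fst x)) (Is ((fst x + 1) mod (2 * l)))) (snd x)"

definition pkey where "pkey k l Is pis sigmas x = {PA k Is pis x, PB k l Is sigmas x}"

lemma par_rel_key:
  "par_rel k d l Is pis sigmas =
     {(x, y). x \<in> idx d l \<and> y \<in> idx d l \<and> pkey k l Is pis sigmas x = pkey k l Is pis sigmas y}"
  unfolding par_rel_def Let_def pkey_def PA_def PB_def doubleton_eq_iff
  by (auto simp: case_prod_unfold)

lemma finite_idx: "finite (idx d l)" by (simp add: idx_def)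

lemma Par_card: "card (Par k d l Is pis sigmas) = card (pkey k l Is pis sigmas ` idx d l)"
  unfolding Par_def par_rel_key by (rule card_quotient_key[OF finite_idx])

lemma Par_even_iff:
  "Par k d l Is pis sigmas \<in> even_partitions d l \<longleftrightarrow>
    (\<forall>x\<in>idx d l. even (card {y\<in>idx d l. pkey k l Is pis sigmas y = pkey k l Is pis sigmas x}))"
proof -
  have "partition_on (idx d l) (Par k d l Is pis sigmas)"
    unfolding Par_def par_rel_key by (rule partition_on_quotient[OF equiv_key])
  then show ?thesis
    unfolding even_partitions_def Par_def par_rel_key quotient_key by auto
qed

lemma Par_class:
  assumes "x \<in> idx d l"
  shows "\<exists>!C. C \<in> Par k d l Is pis sigmas \<and> x \<in> C"
    "C \<in> Par k d l Is pis sigmas \<Longrightarrow> x \<in> C \<Longrightarrow> C = {y\<in>idx d l. pkey k l Is pis sigmas y = pkey k l Is pis sigmas x}"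
  using assms unfolding Par_def par_rel_key quotient_key by auto

lemma finite_even_partitions: "finite (even_partitions d l)"
proof (rule finite_subset)
  show "even_partitions d l \<subseteq> Pow (Pow (idx d l))"
    by (auto simp: even_partitions_def partition_on_def)
  show "finite (Pow (Pow (idx d l)))" by (simp add: finite_idx)
qed

lemma entry_pmf_val:
  assumes "0 \<le> p" "p \<le> 1"
  shows "pmf (entry_pmf p) 1 = p/2" "pmf (entry_pmf p) (-1) = p/2" "pmf (entry_pmf p) 0 = 1 - p"
proof -
  have e: "{x. x} = {True}" "{x::bool. \<not>x} = {False}" by auto
  show "pmf (entry_pmf p) 1 = p/2" "pmf (entry_pmf p) (-1) = p/2" "pmf (entry_pmf p) 0 = 1 - p"
  using assms by (simp_all add: entry_pmf_def pmf_bind pmf_map vimage_def measure_pmf_single e)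
qed

lemma set_entry_pmf: "set_pmf (entry_pmf p) \<subseteq> {-1,0,1}"
  by (auto simp: entry_pmf_def split: if_splits)

lemma entry_moment:
  assumes "0 \<le> p" "p \<le> 1"
  shows "measure_pmf.expectation (entry_pmf p) (\<lambda>t. t ^ a) = (if a = 0 then 1 else if even a then p else 0)"
proof -
  have "measure_pmf.expectation (entry_pmf p) (\<lambda>t. t ^ a) = (\<Sum>t\<in>{-1,0,1::real}. pmf (entry_pmf p) t *\<^sub>R t ^ a)"
    by (rule integral_measure_pmf) (use set_entry_pmf in auto)
  also have "\<dots> = pmf (entry_pmf p) (-1) * (-1)^a + pmf (entry_pmf p) 0 * 0^a + pmf (entry_pmf p) 1"
    by simp
  also have "\<dots> = p/2 * (-1)^a + (1-p) * 0^a + p/2"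
    by (simp only: entry_pmf_val[OF assms])
  finally show ?thesis by (cases "a = 0") (auto simp: power_0_left)
qed

lemma expectation_pair_prod:
  fixes u :: "'a \<Rightarrow> real" and v :: "'b \<Rightarrow> real"
  assumes "finite (set_pmf P)" "finite (set_pmf Q)"
  shows "measure_pmf.expectation (pair_pmf P Q) (\<lambda>z. u (fst z) * v (snd z)) =
         measure_pmf.expectation P u * measure_pmf.expectation Q v"
proof -
  have "measure_pmf.expectation (pair_pmf P Q) (\<lambda>z. u (fst z) * v (snd z)) =
        (\<Sum>z\<in>set_pmf P \<times> set_pmf Q. pmf (pair_pmf P Q) z *\<^sub>R (u (fst z) * v (snd z)))"
    by (rule integral_measure_pmf) (use assms in auto)
  also have "\<dots> = (\<Sum>a\<in>set_pmf P. \<Sum>b\<in>set_pmf Q. (pmf P a * u a) * (pmf Q b * v b))"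
    unfolding sum.cartesian_product by (rule sum.cong) (auto simp: pmf_pair algebra_simps)
  also have "\<dots> = (\<Sum>a\<in>set_pmf P. pmf P a * u a) * (\<Sum>b\<in>set_pmf Q. pmf Q b * v b)"
    by (simp add: sum_product)
  also have "(\<Sum>a\<in>set_pmf P. pmf P a * u a) = measure_pmf.expectation P u"
    by (subst integral_measure_pmf[of "set_pmf P"]) (use assms in auto)
  also have "(\<Sum>b\<in>set_pmf Q. pmf Q b * v b) = measure_pmf.expectation Q v"
    by (subst integral_measure_pmf[of "set_pmf Q"]) (use assms in auto)
  finally show ?thesis .
qed

lemma finite_set_Pi_pmf:
  assumes "finite A" "\<And>x. x \<in> A \<Longrightarrow> finite (set_pmf (p x))"
  shows "finite (set_pmf (Pi_pmf A dflt p))"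
  using assms by (subst set_Pi_pmf) (auto intro!: finite_PiE_dflt)

lemma expectation_prod_Pi_pmf_signed:
  fixes f :: "_ \<Rightarrow> _ \<Rightarrow> real"
  assumes "finite A" "\<And>x. x \<in> A \<Longrightarrow> finite (set_pmf (p x))"
  shows "measure_pmf.expectation (Pi_pmf A dflt p) (\<lambda>y. \<Prod>x\<in>A. f x (y x)) =
         (\<Prod>x\<in>A. measure_pmf.expectation (p x) (f x))"
  using assms
proof (induction A rule: finite_induct)
  case empty
  then show ?case by simp
next
  case (insert x A)
  have "measure_pmf.expectation (Pi_pmf (insert x A) dflt p) (\<lambda>y. \<Prod>z\<in>insert x A. f z (y z)) =
        measure_pmf.expectation (pair_pmf (p x) (Pi_pmf A dflt p))
          (\<lambda>yg. \<Prod>z\<in>insert x A. f z (((snd yg)(x := fst yg)) z))"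
    using insert by (simp add: Pi_pmf_insert case_prod_unfold)
  also have "\<dots> = measure_pmf.expectation (pair_pmf (p x) (Pi_pmf A dflt p))
          (\<lambda>yg. f x (fst yg) * (\<lambda>g. \<Prod>z\<in>A. f z (g z)) (snd yg))"
    using insert by (intro Bochner_Integration.integral_cong refl) (auto intro!: prod.cong)
  also have "\<dots> = measure_pmf.expectation (p x) (f x) * measure_pmf.expectation (Pi_pmf A dflt p) (\<lambda>g. \<Prod>z\<in>A. f z (g z))"
    by (rule expectation_pair_prod) (use insert in \<open>auto intro!: finite_set_Pi_pmf\<close>)
  finally show ?case using insert by simp
qed
lemma monomial_E:
  assumes X: "finite X" and w: "w ` X \<subseteq> tuples n k" and p: "0 \<le> p" "p \<le> 1"
  shows "measure_pmf.expectation (kxor_pmf n k p) (\<lambda>T. \<Prod>x\<in>X. T (w x)) =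
    (if \<forall>v\<in>w ` X. even (card {x\<in>X. w x = v}) then p ^ card (w ` X) else 0)"
proof -
  define W where "W = tuples n k"
  define mult where "mult v = card {x\<in>X. w x = v}" for v
  have fW: "finite W" by (simp add: W_def finite_tuples)
  have eq1: "(\<Prod>x\<in>X. T (w x)) = (\<Prod>v\<in>W. T v ^ mult v)" for T :: "nat list \<Rightarrow> real"
  proof -
    have "(\<Prod>x\<in>X. T (w x)) = (\<Prod>v\<in>W. \<Prod>x\<in>{x\<in>X. w x = v}. T (w x))"
      by (rule prod.group[symmetric]) (use X fW w in \<open>auto simp: W_def\<close>)
    also have "\<dots> = (\<Prod>v\<in>W. T v ^ mult v)"
      by (rule prod.cong) (auto simp: mult_def)
    finally show ?thesis .
  qed
  have "measure_pmf.expectation (kxor_pmf n k p) (\<lambda>T. \<Prod>x\<in>X. T (w x)) =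
        measure_pmf.expectation (kxor_pmf n k p) (\<lambda>T. \<Prod>v\<in>W. T v ^ mult v)"
    by (simp add: eq1)
  also have "\<dots> = (\<Prod>v\<in>W. measure_pmf.expectation (entry_pmf p) (\<lambda>t. t ^ mult v))"
    unfolding kxor_pmf_def W_def
    by (rule expectation_prod_Pi_pmf_signed) (auto simp: finite_tuples intro: finite_subset[OF set_entry_pmf])
  also have "\<dots> = (\<Prod>v\<in>W. (if mult v = 0 then 1 else if even (mult v) then p else 0))"
    by (simp add: entry_moment[OF p])
  also have "\<dots> = (if \<forall>v\<in>w ` X. even (card {x\<in>X. w x = v}) then p ^ card (w ` X) else 0)"
  proof (cases "\<forall>v\<in>w ` X. even (card {x\<in>X. w x = v})")
    case True
    have "(\<Prod>v\<in>W. (if mult v = 0 then 1 else if even (mult v) then p else 0)) = (\<Prod>v\<in>w ` X. p)"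
    proof (rule prod.mono_neutral_cong_right)
      show "finite W" by fact
      show "w ` X \<subseteq> W" using w by (simp add: W_def)
      have "mult i = 0" if "i \<notin> w ` X" for i
        using that unfolding mult_def by (metis (mono_tags, lifting) card.empty empty_Collect_eq image_eqI)
      then show "\<forall>i\<in>W - w ` X. (if mult i = 0 then 1 else if even (mult i) then p else 0) = 1"
        by auto
      show "\<And>x. x \<in> w ` X \<Longrightarrow> (if mult x = 0 then 1 else if even (mult x) then p else 0) = p"
        using True X by (auto simp: mult_def)
    qed
    then show ?thesis using True by simp
  next
    case False
    then obtain v where v: "v \<in> w ` X" "odd (mult v)" by (auto simp: mult_def)
    have "v \<in> W" using v w by (auto simp: W_def)
    moreover have "(if mult v = 0 then 1 else if even (mult v) then p else 0) = 0"
      using v(2) by (cases "mult v = 0") auto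
    ultimately have "(\<Prod>v\<in>W. (if mult v = 0 then 1 else if even (mult v) then p else (0::real))) = 0"
      using fW by (intro prod_zero) blast+
    then show ?thesis using False by (simp only: if_False)
  qed
  finally show ?thesis .
qed
lemma card_fibers:
  assumes "finite S" "finite T" "g ` S \<subseteq> T"
  shows "card S = (\<Sum>y\<in>T. card {x\<in>S. g x = y})"
  using sum.group[OF assms, of "\<lambda>_. 1::nat"] by simp

lemma finite_set_kxor: "finite (set_pmf (kxor_pmf n k p))"
  unfolding kxor_pmf_def
  by (rule finite_set_Pi_pmf) (auto simp: finite_tuples intro: finite_subset[OF set_entry_pmf])

lemma E_S_bound:
  fixes A B :: "'a \<Rightarrow> nat list"
  assumes X: "finite X" and AB: "\<And>x. x \<in> X \<Longrightarrow> A x \<in> tuples n h \<and> B x \<in> tuples n h"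
    and p: "0 \<le> p" "p \<le> 1" and k: "k = 2 * h"
  shows "measure_pmf.expectation (kxor_pmf n k p) (\<lambda>T. \<Prod>x\<in>X. S_phi T (A x) (B x)) \<le>
    (if \<forall>x\<in>X. even (card {y\<in>X. {A y, B y} = {A x, B x}}) then p ^ card ((\<lambda>x. {A x, B x}) ` X) else 0)"
    (is "_ \<le> ?bd")
proof -
  define key where "key x = {A x, B x}" for x
  define w where "w Y x = (if x \<in> Y then A x @ B x else B x @ A x)" for Y x
  define keyw where "keyw v = {take h v, drop h v}" for v :: "nat list"
  have lenAB: "length (A x) = h" "length (B x) = h" if "x \<in> X" for x
    using AB[OF that] by (auto simp: tuples_def)
  have keyw_w: "keyw (w Y x) = key x" if "x \<in> X" for Y x
    using lenAB[OF that] by (auto simp: keyw_def w_def key_def)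
  have w_in: "w Y ` X \<subseteq> tuples n k" for Y
    using AB k by (fastforce simp: w_def tuples_def)
  have expand: "(\<Prod>x\<in>X. S_phi T (A x) (B x)) = (1/2) ^ card X * (\<Sum>Y\<in>Pow X. \<Prod>x\<in>X. T (w Y x))" for T
  proof -
    have "(\<Prod>x\<in>X. S_phi T (A x) (B x)) = (\<Prod>x\<in>X. (1/2) * (T (A x @ B x) + T (B x @ A x)))"
      by (rule prod.cong) (simp_all add: S_phi_def)
    also have "\<dots> = (1/2) ^ card X * (\<Prod>x\<in>X. T (A x @ B x) + T (B x @ A x))"
      by (simp only: prod.distrib prod_constant)
    also have "(\<Prod>x\<in>X. T (A x @ B x) + T (B x @ A x)) =
        (\<Sum>Y\<in>Pow X. (\<Prod>x\<in>Y. T (A x @ B x)) * (\<Prod>x\<in>X - Y. T (B x @ A x)))"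
      by (rule prod_add[OF X])
    also have "\<dots> = (\<Sum>Y\<in>Pow X. \<Prod>x\<in>X. T (w Y x))"
    proof (rule sum.cong)
      fix Y assume "Y \<in> Pow X"
      then have "X \<inter> {x. x \<in> Y} = Y" "X \<inter> - {x. x \<in> Y} = X - Y" by auto
      then show "(\<Prod>x\<in>Y. T (A x @ B x)) * (\<Prod>x\<in>X - Y. T (B x @ A x)) = (\<Prod>x\<in>X. T (w Y x))"
        unfolding w_def using prod.If_cases[OF X, of "\<lambda>x. x \<in> Y" "\<lambda>x. T (A x @ B x)" "\<lambda>x. T (B x @ A x)"]
        by (simp add: if_distrib[of T])
    qed simp
    finally show ?thesis .
  qed
  have mono: "measure_pmf.expectation (kxor_pmf n k p) (\<lambda>T. \<Prod>x\<in>X. T (w Y x)) \<le> ?bd" for Y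
  proof -
    have E: "measure_pmf.expectation (kxor_pmf n k p) (\<lambda>T. \<Prod>x\<in>X. T (w Y x)) =
      (if \<forall>v\<in>w Y ` X. even (card {x\<in>X. w Y x = v}) then p ^ card (w Y ` X) else 0)"
      by (rule monomial_E[OF X w_in p])
    show ?thesis
    proof (cases "\<forall>x\<in>X. even (card {y\<in>X. {A y, B y} = {A x, B x}})")
      case True
      have "key ` X = keyw ` (w Y ` X)" using keyw_w by (force simp: image_image)
      then have "card (key ` X) \<le> card (w Y ` X)" by (metis card_image_le X finite_imageI)
      then have "p ^ card (w Y ` X) \<le> p ^ card (key ` X)" using p by (intro power_decreasing) auto
      then show ?thesis using True E p unfolding key_def by auto
    next
      case False
      then obtain x0 where x0: "x0 \<in> X" "odd (card {y\<in>X. key y = key x0})" by (auto simp: key_def)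
      define C where "C = {y\<in>X. key y = key x0}"
      have fC: "finite C" using X by (simp add: C_def)
      have "\<not> (\<forall>v\<in>w Y ` X. even (card {x\<in>X. w Y x = v}))"
      proof
        assume ev: "\<forall>v\<in>w Y ` X. even (card {x\<in>X. w Y x = v})"
        have "card C = (\<Sum>v\<in>w Y ` C. card {x\<in>C. w Y x = v})"
          by (rule card_fibers) (use fC in auto)
        also have "\<dots> = (\<Sum>v\<in>w Y ` C. card {x\<in>X. w Y x = v})"
        proof (rule sum.cong[OF refl])
          fix v assume "v \<in> w Y ` C"
          then obtain y where y: "y \<in> C" "v = w Y y" by auto
          have "{x\<in>C. w Y x = v} = {x\<in>X. w Y x = v}"
          proof (intro Collect_cong iffI conjI)
            fix x assume "x \<in> X \<and> w Y x = v"
            then have "key x = key y" using keyw_w[of x Y] keyw_w[of y Y] y unfolding C_def by auto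
            then show "x \<in> C" using y \<open>x \<in> X \<and> w Y x = v\<close> unfolding C_def by auto
          qed (auto simp: C_def)
          then show "card {x\<in>C. w Y x = v} = card {x\<in>X. w Y x = v}" by simp
        qed
        finally have "even (card C)"
          using ev by (auto intro!: dvd_sum simp: C_def)
        then show False using x0 by (simp add: C_def)
      qed
      then show ?thesis using E False unfolding key_def by auto
    qed
  qed
  have int: "integrable (measure_pmf (kxor_pmf n k p)) f" for f :: "_ \<Rightarrow> real"
    by (rule integrable_measure_pmf_finite[OF finite_set_kxor])
  have "measure_pmf.expectation (kxor_pmf n k p) (\<lambda>T. \<Prod>x\<in>X. S_phi T (A x) (B x)) =
      (1/2) ^ card X * (\<Sum>Y\<in>Pow X. measure_pmf.expectation (kxor_pmf n k p) (\<lambda>T. \<Prod>x\<in>X. T (w Y x)))"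
    by (simp add: expand int)
  also have "\<dots> \<le> (1/2) ^ card X * (\<Sum>Y\<in>Pow X. ?bd)"
    by (intro mult_left_mono sum_mono mono) auto
  also have "\<dots> = ?bd" using X by (simp add: card_Pow power_one_over)
  finally show ?thesis .
qed

lemma pow_paths:
  assumes A: "finite A" and i: "i \<in> A"
  shows "mat_pow A X (Suc r) i j =
    (\<Sum>Is\<in>{Is\<in>PiE {..<Suc r} (\<lambda>_. A). Is 0 = i}. (\<Prod>t<r. X (Is t) (Is (Suc t))) * X (Is r) j)"
proof (induction r arbitrary: j)
  case 0
  have seteq: "{Is\<in>PiE {..<Suc 0} (\<lambda>_. A). Is 0 = i} = {restrict (\<lambda>_. i) {..<Suc 0}}"
    using i by (auto simp: PiE_iff extensional_def fun_eq_iff)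
  have "(\<Sum>t\<in>A. (if i = t then 1 else 0) * X t j) = (\<Sum>t\<in>A. if i = t then X t j else 0)"
    by (rule sum.cong) auto
  then show ?case using A i by (simp add: mat_mult_def seteq)
next
  case (Suc r)
  define D where "D = {Is\<in>PiE {..<Suc r} (\<lambda>_. A). Is 0 = i}"
  define D' where "D' = {Is\<in>PiE {..<Suc (Suc r)} (\<lambda>_. A). Is 0 = i}"
  have fD: "finite D" using A by (auto simp: D_def intro!: finite_PiE)
  have bij: "bij_betw (\<lambda>(Is, t). Is(Suc r := t)) (D \<times> A) D'"
  proof (rule bij_betw_byWitness[where f' = "\<lambda>Is'. (Is'(Suc r := undefined), Is' (Suc r))"])
    show "\<forall>a\<in>D \<times> A. (\<lambda>Is'. (Is'(Suc r := undefined), Is' (Suc r))) ((\<lambda>(Is, t). Is(Suc r := t)) a) = a"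
      by (auto simp: D_def PiE_iff extensional_def fun_eq_iff)
    show "\<forall>a'\<in>D'. (\<lambda>(Is, t). Is(Suc r := t)) ((\<lambda>Is'. (Is'(Suc r := undefined), Is' (Suc r))) a') = a'"
      by auto
    show "(\<lambda>(Is, t). Is(Suc r := t)) ` (D \<times> A) \<subseteq> D'"
      by (auto simp: D_def D'_def PiE_iff extensional_def)
    show "(\<lambda>Is'. (Is'(Suc r := undefined), Is' (Suc r))) ` D' \<subseteq> D \<times> A"
      by (auto simp: D_def D'_def PiE_iff extensional_def)
  qed
  have "mat_pow A X (Suc (Suc r)) i j = (\<Sum>t\<in>A. mat_pow A X (Suc r) i t * X t j)"
    by (simp add: mat_mult_def)
  also have "\<dots> = (\<Sum>t\<in>A. \<Sum>Is\<in>D. (\<Prod>t'<r. X (Is t') (Is (Suc t'))) * X (Is r) t * X t j)"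
    by (simp only: Suc.IH D_def sum_distrib_right)
  also have "\<dots> = (\<Sum>(Is, t)\<in>D \<times> A. (\<Prod>t'<r. X (Is t') (Is (Suc t'))) * X (Is r) t * X t j)"
    by (subst sum.swap) (simp add: sum.cartesian_product)
  also have "\<dots> = (\<Sum>x\<in>D \<times> A. (\<lambda>Is'. (\<Prod>t'<Suc r. X (Is' t') (Is' (Suc t'))) * X (Is' (Suc r)) j) ((\<lambda>(Is, t). Is(Suc r := t)) x))"
    by (rule sum.cong) (auto intro!: prod.cong)
  also have "\<dots> = (\<Sum>Is'\<in>D'. (\<Prod>t'<Suc r. X (Is' t') (Is' (Suc t'))) * X (Is' (Suc r)) j)"
    by (rule sum.reindex_bij_betw[OF bij])
  finally show ?case by (simp add: D'_def)
qed

lemma trace_paths: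
  assumes A: "finite A"
  shows "mat_trace A (mat_pow A X (Suc r)) =
    (\<Sum>Is\<in>PiE {..<Suc r} (\<lambda>_. A). \<Prod>j<Suc r. X (Is j) (Is ((j + 1) mod Suc r)))"
proof -
  define D where "D = PiE {..<Suc r} (\<lambda>_. A)"
  have fD: "finite D" using A by (auto simp: D_def intro!: finite_PiE)
  have "mat_trace A (mat_pow A X (Suc r)) =
      (\<Sum>i\<in>A. \<Sum>Is\<in>{Is\<in>D. Is 0 = i}. (\<Prod>t<r. X (Is t) (Is (Suc t))) * X (Is r) (Is 0))"
    unfolding mat_trace_def D_def by (rule sum.cong) (auto simp del: mat_pow.simps simp: pow_paths[OF A])
  also have "\<dots> = (\<Sum>Is\<in>D. (\<Prod>t<r. X (Is t) (Is (Suc t))) * X (Is r) (Is 0))"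
    by (rule sum.group) (use fD A in \<open>auto simp: D_def PiE_iff\<close>)
  also have "\<dots> = (\<Sum>Is\<in>D. \<Prod>j<Suc r. X (Is j) (Is ((j + 1) mod Suc r)))"
  proof (rule sum.cong[OF refl])
    fix Is
    have "(\<Prod>t<r. X (Is t) (Is (Suc t))) = (\<Prod>j<r. X (Is j) (Is ((j + 1) mod Suc r)))"
      by (rule prod.cong) auto
    then show "(\<Prod>t<r. X (Is t) (Is (Suc t))) * X (Is r) (Is 0) = (\<Prod>j<Suc r. X (Is j) (Is ((j + 1) mod Suc r)))"
      by simp
  qed
  finally show ?thesis by (simp add: D_def)
qed


lemma rot_prod:
  fixes f :: "nat \<Rightarrow> real"
  assumes "0 < L"
  shows "(\<Prod>j<L. f ((j + 1) mod L)) = (\<Prod>j<L. f j)"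
proof -
  have md: "(a + 1) mod L = (if a + 1 = L then 0 else a + 1)" if "a < L" for a
    using that by auto
  have "bij_betw (\<lambda>j. (j + 1) mod L) {..<L} {..<L}"
  proof (rule bij_betw_imageI)
    show "inj_on (\<lambda>j. (j + 1) mod L) {..<L}"
    proof (rule inj_onI)
      fix x y assume xy: "x \<in> {..<L}" "y \<in> {..<L}" "(x + 1) mod L = (y + 1) mod L"
      then show "x = y" using md[of x] md[of y] by (auto split: if_splits)
    qed
    show "(\<lambda>j. (j + 1) mod L) ` {..<L} = {..<L}"
    proof (rule subset_antisym)
      show "(\<lambda>j. (j + 1) mod L) ` {..<L} \<subseteq> {..<L}" using assms by auto
    next
      show "{..<L} \<subseteq> (\<lambda>j. (j + 1) mod L) ` {..<L}"
      proof (rule subsetI)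
      fix y assume y: "y \<in> {..<L}"
      show "y \<in> (\<lambda>j. (j + 1) mod L) ` {..<L}"
      proof (cases y)
        case 0
        then show ?thesis using assms by (intro image_eqI[of _ _ "L - 1"]) auto
      next
        case (Suc z)
        then show ?thesis using y by (intro image_eqI[of _ _ z]) auto
      qed
    qed
    qed
  qed
  then show ?thesis by (rule prod.reindex_bij_betw)
qed

lemma m_eq: "even (k::nat) \<Longrightarrow> k * d div 2 = k div 2 * d"
  by (auto elim!: evenE)
lemma finite_perm_sub: "finite {\<sigma>. \<sigma> permutes {..<(a::nat)} \<and> R \<sigma>}"
  by (rule finite_subset[OF _ finite_permutations[of "{..<a}"]]) auto

lemma count_tau:
  fixes Is :: "nat \<Rightarrow> nat list"
  assumes k: "even k" and l: "l \<ge> 1" and Is: "Is \<in> PiE {..<2*l} (\<lambda>_. tuples n (k*d div 2))"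
  shows "real (card {\<tau> \<in> PiE {..<2*l} (\<lambda>_. {\<sigma>. \<sigma> permutes {..<k*d div 2}}). Par k d l Is (\<lambda>_. id) \<tau> = Q})
        \<le> (real (k*d div 2) ^ (k div 2)) ^ card Q * (\<Prod>j<2*l. hist_fact n (Is j))"
proof -
  define h where "h = k div 2"
  define m where "m = k*d div 2"
  define L where "L = 2*l"
  have mh: "m = h*d" using m_eq[OF k] by (simp add: m_def h_def)
  have L0: "0 < L" using l by (simp add: L_def)
  define P where "P = {\<sigma>. \<sigma> permutes {..<m}}"
  define D where "D = {\<tau> \<in> PiE {..<L} (\<lambda>_. P). Par k d l Is (\<lambda>_. id) \<tau> = Q}"
  define Bt where "Bt \<tau> = (\<lambda>j\<in>{..<L}. apply_perm (\<tau> j) (Is ((j+1) mod L)))" for \<tau> :: "nat \<Rightarrow> nat \<Rightarrow> nat"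
  define H where "H = (\<Prod>j<L. hist_fact n (Is j))"
  have IsL: "Is j \<in> tuples n m" if "j < L" for j using Is that by (auto simp: L_def m_def)
  have IsL': "Is ((j+1) mod L) \<in> tuples n m" for j using IsL L0 by simp
  have fP: "finite P" by (simp add: P_def finite_permutations)
  have fD: "finite D" unfolding D_def
    by (rule finite_subset[of _ "PiE {..<L} (\<lambda>_. P)"]) (auto intro!: finite_PiE fP)
  have fiber: "real (card {\<tau>\<in>D. Bt \<tau> = Y}) \<le> H" for Y
  proof -
    define F where "F j = {\<sigma>. \<sigma> permutes {..<length (Is ((j+1) mod L))} \<and> apply_perm \<sigma> (Is ((j+1) mod L)) = Y j}" for j
    have "{\<tau>\<in>D. Bt \<tau> = Y} \<subseteq> PiE {..<L} F"
    proof (rule subsetI)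
      fix \<tau> assume "\<tau> \<in> {\<tau>\<in>D. Bt \<tau> = Y}"
      then have t: "\<tau> \<in> PiE {..<L} (\<lambda>_. P)" "Bt \<tau> = Y" by (auto simp: D_def)
      show "\<tau> \<in> PiE {..<L} F"
      proof (rule PiE_I)
        fix j assume j: "j \<in> {..<L}"
        have "apply_perm (\<tau> j) (Is ((j+1) mod L)) = Y j" using fun_cong[OF t(2), of j] j unfolding Bt_def by auto
        moreover have "\<tau> j permutes {..<m}" using t(1) j by (auto simp: P_def)
        moreover have "length (Is ((j+1) mod L)) = m" using IsL'[of j] by (simp add: tuples_def)
        ultimately show "\<tau> j \<in> F j" by (simp add: F_def)
      next
        fix j assume "j \<notin> {..<L}" then show "\<tau> j = undefined" using t(1) by (auto simp: PiE_iff extensional_def)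
      qed
    qed
    then have "card {\<tau>\<in>D. Bt \<tau> = Y} \<le> card (PiE {..<L} F)"
      by (intro card_mono) (auto intro!: finite_PiE simp: F_def finite_perm_sub)
    also have "\<dots> = (\<Prod>j<L. card (F j))" by (simp add: card_PiE)
    finally have c1: "card {\<tau>\<in>D. Bt \<tau> = Y} \<le> (\<Prod>j<L. card (F j))" .
    have "real (card {\<tau>\<in>D. Bt \<tau> = Y}) \<le> real (\<Prod>j<L. card (F j))"
      using c1 by (simp only: of_nat_le_iff)
    also have "\<dots> = (\<Prod>j<L. real (card (F j)))" by (rule of_nat_prod)
    also have "\<dots> \<le> (\<Prod>j<L. hist_fact n (Is ((j+1) mod L)))"
    proof (rule prod_mono)
      fix j assume "j \<in> {..<L}"
      have "set (Is ((j+1) mod L)) \<subseteq> {..<n}" using IsL'[of j] by (simp add: tuples_def)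
      then show "0 \<le> real (card (F j)) \<and> real (card (F j)) \<le> hist_fact n (Is ((j+1) mod L))"
        unfolding F_def using stab_bound by auto
    qed
    also have "\<dots> = H" unfolding H_def by (rule rot_prod[OF L0])
    finally show ?thesis .
  qed
  have img: "real (card (Bt ` D)) \<le> (real m ^ h) ^ card Q"
  proof (cases "D = {}")
    case True then show ?thesis by simp
  next
    case False
    then obtain \<tau>0 where "\<tau>0 \<in> D" by auto
    then have Qeq: "Q = Par k d l Is (\<lambda>_. id) \<tau>0" by (simp add: D_def)
    have fQ: "finite Q" unfolding Qeq Par_def par_rel_key quotient_key by (simp add: finite_idx)
    define cls where "cls x = (SOME C. C \<in> Q \<and> x \<in> C)" for x
    define rep where "rep C = (SOME y. y \<in> C)" for C :: "(nat \<times> nat) set"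
    define Aof where "Aof x = block h (Is (fst x)) (snd x)" for x
    define Lset where "Lset C = {b. set b \<subseteq> set (Is ((fst (rep C) + 1) mod L)) \<and> length b = h}" for C
    define \<Phi> where "\<Phi> \<beta> = (\<lambda>j\<in>{..<L}. concat (map (\<lambda>s. if Aof (j,s) = Aof (rep (cls (j,s))) then \<beta> (cls (j,s)) else Aof (rep (cls (j,s)))) [0..<d]))" for \<beta>
    have cls: "cls x \<in> Q \<and> x \<in> cls x" if "x \<in> idx d l" for x
      unfolding cls_def Qeq by (rule someI_ex) (use Par_class(1)[OF that] in blast)
    have Cprops: "rep C \<in> C \<and> C \<subseteq> idx d l" if "C \<in> Q" for C
    proof -
      have "C \<in> (\<lambda>x. {y\<in>idx d l. pkey k l Is (\<lambda>_. id) \<tau>0 y = pkey k l Is (\<lambda>_. id) \<tau>0 x}) ` idx d l"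
        using that unfolding Qeq Par_def par_rel_key quotient_key .
      then obtain x where "x \<in> idx d l" "C = {y\<in>idx d l. pkey k l Is (\<lambda>_. id) \<tau>0 y = pkey k l Is (\<lambda>_. id) \<tau>0 x}"
        by blast
      then have "x \<in> C" "C \<subseteq> idx d l" by auto
      then show ?thesis unfolding rep_def by (metis someI_ex)
    qed
    have main: "Bt \<tau> = \<Phi> (\<lambda>C\<in>Q. PB k l Is \<tau> (rep C)) \<and> (\<lambda>C\<in>Q. PB k l Is \<tau> (rep C)) \<in> PiE Q Lset"
      if tD: "\<tau> \<in> D" for \<tau>
    proof
      have Q\<tau>: "Q = Par k d l Is (\<lambda>_. id) \<tau>" and tP: "\<tau> \<in> PiE {..<L} (\<lambda>_. P)" using tD by (auto simp: D_def)
      have perm: "\<tau> j permutes {..<m}" if "j < L" for j using tP that by (auto simp: P_def)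
      have PBin: "PB k l Is \<tau> r \<in> tuples n h \<and> set (PB k l Is \<tau> r) \<subseteq> set (Is ((fst r + 1) mod L))"
        if r: "r \<in> idx d l" for r
      proof -
        have fr: "fst r < L" "snd r < d" using r by (auto simp: idx_def L_def)
        define X where "X = apply_perm (\<tau> (fst r)) (Is ((fst r + 1) mod L))"
        have lX: "length (Is ((fst r + 1) mod L)) = m" using IsL' by (simp add: tuples_def)
        have X: "X \<in> tuples n m" unfolding X_def by (rule apply_perm_tuples[OF IsL' perm[OF fr(1)]])
        have "set X \<subseteq> set (Is ((fst r + 1) mod L))" unfolding X_def
          by (rule set_apply_perm) (use perm[OF fr(1)] lX in simp)
        moreover have "set (block h X (snd r)) \<subseteq> set X"
          unfolding block_def by (meson order_trans set_drop_subset set_take_subset)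
        moreover have "block h X (snd r) \<in> tuples n h" by (rule block_tuples[OF X mh fr(2)])
        moreover have "PB k l Is \<tau> r = block h X (snd r)" by (simp add: PB_def X_def h_def L_def)
        ultimately show ?thesis by auto
      qed
      show "(\<lambda>C\<in>Q. PB k l Is \<tau> (rep C)) \<in> PiE Q Lset"
      proof (rule PiE_I)
        fix C assume C: "C \<in> Q"
        then have "rep C \<in> idx d l" using Cprops by blast
        then show "(\<lambda>C\<in>Q. PB k l Is \<tau> (rep C)) C \<in> Lset C"
          using PBin C by (auto simp: Lset_def tuples_def)
      qed simp
      show "Bt \<tau> = \<Phi> (\<lambda>C\<in>Q. PB k l Is \<tau> (rep C))"
      proof
        fix j
        show "Bt \<tau> j = \<Phi> (\<lambda>C\<in>Q. PB k l Is \<tau> (rep C)) j"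
        proof (cases "j < L")
          case False
          then show ?thesis by (simp add: Bt_def \<Phi>_def)
        next
          case True
          define X where "X = apply_perm (\<tau> j) (Is ((j + 1) mod L))"
          have lX: "length X = h * d" using IsL'[of j] mh by (simp add: X_def tuples_def)
          have "Bt \<tau> j = X" using True by (simp add: Bt_def X_def)
          also have "\<dots> = concat (map (\<lambda>s. block h X s) [0..<d])" by (rule concat_blocks[OF lX, symmetric])
          also have "\<dots> = concat (map (\<lambda>s. if Aof (j,s) = Aof (rep (cls (j,s))) then (\<lambda>C\<in>Q. PB k l Is \<tau> (rep C)) (cls (j,s)) else Aof (rep (cls (j,s)))) [0..<d])"
          proof (rule arg_cong[where f=concat], rule map_cong[OF refl])
            fix s assume "s \<in> set [0..<d]"
            then have x: "(j, s) \<in> idx d l" using True by (auto simp: idx_def L_def)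
            define r where "r = rep (cls (j, s))"
            have cx: "cls (j,s) \<in> Q" "(j,s) \<in> cls (j,s)" using cls[OF x] by auto
            have r: "r \<in> cls (j,s)" using Cprops[OF cx(1)] by (simp add: r_def)
            have "cls (j,s) = {y\<in>idx d l. pkey k l Is (\<lambda>_. id) \<tau> y = pkey k l Is (\<lambda>_. id) \<tau> (j,s)}"
              using Par_class(2)[OF x _ cx(2)] cx(1) Q\<tau> by simp
            then have "pkey k l Is (\<lambda>_. id) \<tau> r = pkey k l Is (\<lambda>_. id) \<tau> (j,s)" using r by auto
            moreover have "PA k Is (\<lambda>_. id) y = Aof y" for y by (simp add: PA_def Aof_def h_def)
            moreover have "block h X s = PB k l Is \<tau> (j, s)" by (simp add: PB_def X_def h_def L_def)
            ultimately have key: "{Aof r, PB k l Is \<tau> r} = {Aof (j,s), block h X s}"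
              by (simp add: pkey_def)
            show "block h X s = (if Aof (j, s) = Aof (rep (cls (j,s))) then (\<lambda>C\<in>Q. PB k l Is \<tau> (rep C)) (cls (j,s)) else Aof (rep (cls (j,s))))"
            proof -
              have g: "block h X s = (if Aof (j, s) = Aof r then PB k l Is \<tau> r else Aof r)"
                using key unfolding doubleton_eq_iff by auto
              then show ?thesis using cx(1) by (simp add: r_def)
            qed
          qed
          also have "\<dots> = \<Phi> (\<lambda>C\<in>Q. PB k l Is \<tau> (rep C)) j"
            using True by (simp add: \<Phi>_def)
          finally show ?thesis .
        qed
      qed
    qed
    have "Bt ` D \<subseteq> \<Phi> ` PiE Q Lset" using main by blast
    have fL: "finite (Lset C)" for C
    proof -
      have "Lset C = {b. set b \<subseteq> set (Is ((fst (rep C) + 1) mod L)) \<and> length b = h}" by (simp add: Lset_def)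
      then show ?thesis by (simp add: finite_lists_length_eq)
    qed
    have "card (Bt ` D) \<le> card (\<Phi> ` PiE Q Lset)"
      by (rule card_mono) (use \<open>Bt ` D \<subseteq> _\<close> fQ fL in \<open>auto intro!: finite_PiE\<close>)
    also have "\<dots> \<le> card (PiE Q Lset)" by (rule card_image_le) (use fQ fL in \<open>auto intro!: finite_PiE\<close>)
    also have "\<dots> = (\<Prod>C\<in>Q. card (Lset C))" by (simp add: card_PiE fQ)
    finally have c2: "card (Bt ` D) \<le> (\<Prod>C\<in>Q. card (Lset C))" .
    have "real (card (Bt ` D)) \<le> real (\<Prod>C\<in>Q. card (Lset C))"
      using c2 by (simp only: of_nat_le_iff)
    also have "\<dots> = (\<Prod>C\<in>Q. real (card (Lset C)))" by (rule of_nat_prod)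
    also have "\<dots> \<le> (\<Prod>C\<in>Q. real m ^ h)"
    proof (rule prod_mono)
      fix C assume "C \<in> Q"
      have "card (Lset C) = card (set (Is ((fst (rep C) + 1) mod L))) ^ h"
        unfolding Lset_def by (rule card_lists_length_eq) simp
      moreover have "card (set (Is ((fst (rep C) + 1) mod L))) \<le> m"
        using card_length[of "Is ((fst (rep C) + 1) mod L)"] IsL' by (simp add: tuples_def)
      ultimately have "card (Lset C) \<le> m ^ h" by (simp add: power_mono)
      then have "real (card (Lset C)) \<le> real (m ^ h)" by (simp only: of_nat_le_iff)
      then show "0 \<le> real (card (Lset C)) \<and> real (card (Lset C)) \<le> real m ^ h"
        by simp
    qed
    also have "\<dots> = (real m ^ h) ^ card Q" by simp
    finally show ?thesis .
  qed
  have "card D = (\<Sum>Y\<in>Bt ` D. card {\<tau>\<in>D. Bt \<tau> = Y})"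
    by (rule card_fibers) (use fD in auto)
  then have "real (card D) = (\<Sum>Y\<in>Bt ` D. real (card {\<tau>\<in>D. Bt \<tau> = Y}))" by simp
  also have "\<dots> \<le> (\<Sum>Y\<in>Bt ` D. H)" by (rule sum_mono) (rule fiber)
  also have "\<dots> = real (card (Bt ` D)) * H" by simp
  also have "\<dots> \<le> (real m ^ h) ^ card Q * H"
    by (rule mult_right_mono[OF img]) (simp add: H_def hist_fact_def prod_nonneg)
  finally show ?thesis by (simp add: D_def P_def H_def m_def h_def L_def)
qed


lemma rel_cong:
  assumes "\<And>x. x \<in> X \<Longrightarrow> f x = g x"
  shows "{(x, y). x \<in> X \<and> y \<in> X \<and> f x = f y} = {(x, y). x \<in> X \<and> y \<in> X \<and> g x = g y}"
  using assms by auto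

lemma reparam:
  fixes G :: "(nat \<times> nat) set set \<Rightarrow> real" and k d n l :: nat
  assumes l: "l \<ge> 1"
  defines "m \<equiv> k * d div 2"
  shows "(\<Sum>Is\<in>PiE {..<2*l} (\<lambda>_. tuples n m). \<Sum>pis\<in>PiE {..<2*l} (\<lambda>_. {\<sigma>. \<sigma> permutes {..<m}}).
           \<Sum>sigmas\<in>PiE {..<2*l} (\<lambda>_. {\<sigma>. \<sigma> permutes {..<m}}). G (Par k d l Is pis sigmas))
       = fact m ^ (2*l) * (\<Sum>Is\<in>PiE {..<2*l} (\<lambda>_. tuples n m). \<Sum>\<tau>\<in>PiE {..<2*l} (\<lambda>_. {\<sigma>. \<sigma> permutes {..<m}}).
           G (Par k d l Is (\<lambda>_. id) \<tau>))"
proof -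
  define L where "L = 2 * l"
  define P where "P = {\<sigma>. \<sigma> permutes {..<m}}"
  define N where "N = tuples n m"
  define K where "K = (\<Sum>Is\<in>PiE {..<L} (\<lambda>_. N). \<Sum>\<tau>\<in>PiE {..<L} (\<lambda>_. P). G (Par k d l Is (\<lambda>_. id) \<tau>))"
  have L0: "0 < L" using l by (simp add: L_def)
  have fixed: "(\<Sum>Is\<in>PiE {..<L} (\<lambda>_. N). \<Sum>sigmas\<in>PiE {..<L} (\<lambda>_. P). G (Par k d l Is pis sigmas)) = K"
    if pis: "pis \<in> PiE {..<L} (\<lambda>_. P)" for pis
  proof -
    have pp: "pis j permutes {..<m}" if "j < L" for j using pis that by (auto simp: P_def)
    have pp': "pis ((j + 1) mod L) permutes {..<m}" for j using pp L0 by simp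
    define sig where "sig \<tau> = (\<lambda>j\<in>{..<L}. pis ((j + 1) mod L) \<circ> \<tau> j)" for \<tau> :: "nat \<Rightarrow> nat \<Rightarrow> nat"
    define isig where "isig \<sigma> = (\<lambda>j\<in>{..<L}. inv (pis ((j + 1) mod L)) \<circ> \<sigma> j)" for \<sigma> :: "nat \<Rightarrow> nat \<Rightarrow> nat"
    define pIs where "pIs Is = (\<lambda>j\<in>{..<L}. apply_perm (pis j) (Is j))" for Is :: "nat \<Rightarrow> nat list"
    define ipIs where "ipIs Is = (\<lambda>j\<in>{..<L}. apply_perm (inv (pis j)) (Is j))" for Is :: "nat \<Rightarrow> nat list"
    have inv1: "inv (pis (Suc j mod L)) (pis (Suc j mod L) y) = y" for j y using permutes_inverses(2)[OF pp'[of j]] by simp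
    have inv2: "pis (Suc j mod L) (inv (pis (Suc j mod L)) y) = y" for j y using permutes_inverses(1)[OF pp'[of j]] by simp
    have bsig: "bij_betw sig (PiE {..<L} (\<lambda>_. P)) (PiE {..<L} (\<lambda>_. P))"
    proof (rule bij_betw_byWitness[where f' = isig])
      show "\<forall>a\<in>PiE {..<L} (\<lambda>_. P). isig (sig a) = a"
        using pp' by (auto simp: isig_def sig_def PiE_iff extensional_def fun_eq_iff inv1 inv2)
      show "\<forall>a\<in>PiE {..<L} (\<lambda>_. P). sig (isig a) = a"
        using pp' by (auto simp: isig_def sig_def PiE_iff extensional_def fun_eq_iff inv1 inv2)
      show "sig ` PiE {..<L} (\<lambda>_. P) \<subseteq> PiE {..<L} (\<lambda>_. P)"
        using pp' by (auto simp: sig_def P_def PiE_iff intro!: permutes_compose)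
      show "isig ` PiE {..<L} (\<lambda>_. P) \<subseteq> PiE {..<L} (\<lambda>_. P)"
        using pp' by (auto simp: isig_def P_def PiE_iff intro!: permutes_compose permutes_inv)
    qed
    have lenN: "length I = m" if "I \<in> N" for I using that by (simp add: N_def tuples_def)
    have bIs: "bij_betw pIs (PiE {..<L} (\<lambda>_. N)) (PiE {..<L} (\<lambda>_. N))"
    proof (rule bij_betw_byWitness[where f' = ipIs])
      show "\<forall>a\<in>PiE {..<L} (\<lambda>_. N). ipIs (pIs a) = a"
        using pp lenN by (auto simp: ipIs_def pIs_def PiE_iff extensional_def fun_eq_iff apply_perm_inv1)
      show "\<forall>a\<in>PiE {..<L} (\<lambda>_. N). pIs (ipIs a) = a"
        using pp lenN by (auto simp: ipIs_def pIs_def PiE_iff extensional_def fun_eq_iff apply_perm_inv2)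
      show "pIs ` PiE {..<L} (\<lambda>_. N) \<subseteq> PiE {..<L} (\<lambda>_. N)"
        using pp by (auto simp: pIs_def N_def PiE_iff intro!: apply_perm_tuples)
      show "ipIs ` PiE {..<L} (\<lambda>_. N) \<subseteq> PiE {..<L} (\<lambda>_. N)"
        using pp by (auto simp: ipIs_def N_def PiE_iff intro!: apply_perm_tuples permutes_inv)
    qed
    have Par_eq: "Par k d l Is pis (sig \<tau>) = Par k d l (pIs Is) (\<lambda>_. id) \<tau>"
      if Is: "Is \<in> PiE {..<L} (\<lambda>_. N)" and t: "\<tau> \<in> PiE {..<L} (\<lambda>_. P)" for Is \<tau>
    proof -
      have "pkey k l Is pis (sig \<tau>) x = pkey k l (pIs Is) (\<lambda>_. id) \<tau> x" if x: "x \<in> idx d l" for x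
      proof -
        obtain j s where xs: "x = (j, s)" "j < L" "s < d" using x by (auto simp: idx_def L_def)
        have j': "(j + 1) mod L < L" using L0 by simp
        have A: "PA k Is pis x = PA k (pIs Is) (\<lambda>_. id) x" using xs by (simp add: PA_def pIs_def)
        have tj: "\<tau> j permutes {..<length (Is ((j + 1) mod L))}"
          using t xs(2) Is j' lenN by (auto simp: PiE_iff P_def)
        have B: "PB k l Is (sig \<tau>) x = PB k l (pIs Is) \<tau> x"
          using xs j' apply_perm_comp[OF tj, of "pis ((j + 1) mod L)"]
          by (simp add: PB_def pIs_def sig_def L_def[symmetric])
        show ?thesis using A B by (simp add: pkey_def)
      qed
      then have "{(x, y). x \<in> idx d l \<and> y \<in> idx d l \<and> pkey k l Is pis (sig \<tau>) x = pkey k l Is pis (sig \<tau>) y}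
          = {(x, y). x \<in> idx d l \<and> y \<in> idx d l \<and> pkey k l (pIs Is) (\<lambda>_. id) \<tau> x = pkey k l (pIs Is) (\<lambda>_. id) \<tau> y}"
        by (rule rel_cong)
      then show ?thesis unfolding Par_def par_rel_key by simp
    qed
    have "(\<Sum>Is\<in>PiE {..<L} (\<lambda>_. N). \<Sum>sigmas\<in>PiE {..<L} (\<lambda>_. P). G (Par k d l Is pis sigmas))
        = (\<Sum>Is\<in>PiE {..<L} (\<lambda>_. N). \<Sum>\<tau>\<in>PiE {..<L} (\<lambda>_. P). G (Par k d l Is pis (sig \<tau>)))"
      by (rule sum.cong[OF refl], rule sum.reindex_bij_betw[OF bsig, symmetric])
    also have "\<dots> = (\<Sum>Is\<in>PiE {..<L} (\<lambda>_. N). \<Sum>\<tau>\<in>PiE {..<L} (\<lambda>_. P). G (Par k d l (pIs Is) (\<lambda>_. id) \<tau>))"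
      by (intro sum.cong refl) (rule arg_cong[where f=G], rule Par_eq)
    also have "\<dots> = K" unfolding K_def
      by (rule sum.reindex_bij_betw[OF bIs, where g = "\<lambda>Is. \<Sum>\<tau>\<in>PiE {..<L} (\<lambda>_. P). G (Par k d l Is (\<lambda>_. id) \<tau>)"])
    finally show ?thesis .
  qed
  have "(\<Sum>Is\<in>PiE {..<L} (\<lambda>_. N). \<Sum>pis\<in>PiE {..<L} (\<lambda>_. P). \<Sum>sigmas\<in>PiE {..<L} (\<lambda>_. P). G (Par k d l Is pis sigmas))
      = (\<Sum>pis\<in>PiE {..<L} (\<lambda>_. P). \<Sum>Is\<in>PiE {..<L} (\<lambda>_. N). \<Sum>sigmas\<in>PiE {..<L} (\<lambda>_. P). G (Par k d l Is pis sigmas))"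
    by (rule sum.swap)
  also have "\<dots> = (\<Sum>pis\<in>PiE {..<L} (\<lambda>_. P). K)" by (rule sum.cong[OF refl]) (rule fixed)
  also have "\<dots> = fact m ^ L * K"
  proof -
    have "card (PiE {..<L} (\<lambda>_. P)) = fact m ^ L"
      by (simp add: card_PiE P_def card_permutations)
    then show ?thesis by simp
  qed
  finally show ?thesis by (simp add: K_def L_def N_def P_def)
qed


lemma expand_R:
  fixes T :: "nat list \<Rightarrow> real" and Is :: "nat \<Rightarrow> nat list" and k d l :: nat
  defines "m \<equiv> k * d div 2"
  shows "(\<Prod>j<2*l. R_phi_d k d T (Is j) (Is ((j + 1) mod (2*l)))) =
     (1 / (fact m)\<^sup>2) ^ (2*l) *
     (\<Sum>pis\<in>PiE {..<2*l} (\<lambda>_. {\<sigma>. \<sigma> permutes {..<m}}). \<Sum>sigmas\<in>PiE {..<2*l} (\<lambda>_. {\<sigma>. \<sigma> permutes {..<m}}).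
        \<Prod>x\<in>idx d l. S_phi T (PA k Is pis x) (PB k l Is sigmas x))"
proof -
  define P where "P = {\<sigma>. \<sigma> permutes {..<m}}"
  define L where "L = 2 * l"
  define g where "g j \<pi> \<sigma> = S_phi_d k d T (apply_perm \<pi> (Is j)) (apply_perm \<sigma> (Is ((j + 1) mod L)))" for j \<pi> \<sigma>
  have fP: "finite P" by (simp add: P_def finite_permutations)
  have "(\<Prod>j<L. R_phi_d k d T (Is j) (Is ((j + 1) mod L))) = (\<Prod>j<L. (1 / (fact m)\<^sup>2) * (\<Sum>\<pi>\<in>P. \<Sum>\<sigma>\<in>P. g j \<pi> \<sigma>))"
    by (simp add: R_phi_d_def g_def P_def m_def)
  also have "\<dots> = (1 / (fact m)\<^sup>2) ^ L * (\<Prod>j<L. \<Sum>\<pi>\<in>P. \<Sum>\<sigma>\<in>P. g j \<pi> \<sigma>)"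
    by (simp only: prod.distrib prod_constant card_lessThan)
  also have "(\<Prod>j<L. \<Sum>\<pi>\<in>P. \<Sum>\<sigma>\<in>P. g j \<pi> \<sigma>) = (\<Sum>pis\<in>PiE {..<L} (\<lambda>_. P). \<Prod>j<L. \<Sum>\<sigma>\<in>P. g j (pis j) \<sigma>)"
    by (rule prod_sum_PiE) (simp_all add: fP)
  also have "\<dots> = (\<Sum>pis\<in>PiE {..<L} (\<lambda>_. P). \<Sum>sigmas\<in>PiE {..<L} (\<lambda>_. P). \<Prod>j<L. g j (pis j) (sigmas j))"
    by (rule sum.cong[OF refl], rule prod_sum_PiE) (simp_all add: fP)
  also have "\<dots> = (\<Sum>pis\<in>PiE {..<L} (\<lambda>_. P). \<Sum>sigmas\<in>PiE {..<L} (\<lambda>_. P). \<Prod>x\<in>idx d l. S_phi T (PA k Is pis x) (PB k l Is sigmas x))"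
  proof (intro sum.cong refl)
    fix pis sigmas
    have "(\<Prod>j<L. g j (pis j) (sigmas j)) = (\<Prod>j<L. \<Prod>s<d. S_phi T (PA k Is pis (j, s)) (PB k l Is sigmas (j, s)))"
      by (simp add: g_def S_phi_d_def PA_def PB_def L_def)
    also have "\<dots> = (\<Prod>x\<in>{..<L} \<times> {..<d}. S_phi T (PA k Is pis x) (PB k l Is sigmas x))"
      by (simp add: prod.cartesian_product case_prod_unfold)
    finally show "(\<Prod>j<L. g j (pis j) (sigmas j)) = (\<Prod>x\<in>idx d l. S_phi T (PA k Is pis x) (PB k l Is sigmas x))"
      by (simp add: idx_def L_def)
  qed
  finally show ?thesis by (simp add: L_def P_def)
qed

lemma group_Q:
  fixes f :: "(nat \<times> nat) set set \<Rightarrow> real" and D :: "'a set" and par :: "'a \<Rightarrow> (nat \<times> nat) set set"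
  assumes "finite D" "finite S"
  shows "(\<Sum>\<tau>\<in>D. if par \<tau> \<in> S then f (par \<tau>) else 0) = (\<Sum>Q\<in>S. f Q * card {\<tau>\<in>D. par \<tau> = Q})"
proof -
  have "(\<Sum>\<tau>\<in>D. if par \<tau> \<in> S then f (par \<tau>) else 0) = (\<Sum>\<tau>\<in>D. \<Sum>Q\<in>S. if Q = par \<tau> then f Q else 0)"
    by (rule sum.cong[OF refl]) (simp add: sum.delta[OF assms(2)])
  also have "\<dots> = (\<Sum>Q\<in>S. \<Sum>\<tau>\<in>D. if par \<tau> = Q then f Q else 0)"
    by (subst sum.swap) (simp add: eq_commute)
  also have "\<dots> = (\<Sum>Q\<in>S. f Q * card {\<tau>\<in>D. par \<tau> = Q})"
  proof (rule sum.cong[OF refl])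
    fix Q
    have "(\<Sum>\<tau>\<in>D. if par \<tau> = Q then f Q else 0) = (\<Sum>\<tau>\<in>{\<tau>\<in>D. par \<tau> = Q}. f Q)"
      by (rule sum.inter_filter[symmetric, OF assms(1)])
    then show "(\<Sum>\<tau>\<in>D. if par \<tau> = Q then f Q else 0) = f Q * card {\<tau>\<in>D. par \<tau> = Q}" by simp
  qed
  finally show ?thesis .
qed

theorem mainTheorem4:
  fixes k d l n :: nat and p :: real
  assumes "even k" and "d \<ge> 1" and "l \<ge> 1" and "n \<ge> 1" and "0 \<le> p" and "p \<le> 1"
  shows "measure_pmf.expectation (kxor_pmf n k p)
           (\<lambda>T. mat_trace (tuples n (k * d div 2))
                   (mat_pow (tuples n (k * d div 2)) (R_phi_d k d T) (2 * l)))
         \<le> 1 / (fact (k * d div 2)) ^ (2 * l) *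
           (\<Sum>Q\<in>even_partitions d l.
              (p * real (k * d div 2) ^ (k div 2)) ^ card Q *
              (\<Sum>Is\<in>{Is \<in> PiE {..<2 * l} (\<lambda>_. tuples n (k * d div 2)). Q_valid k d l Q Is}.
                 \<Prod>j<2 * l. hist_fact n (Is j)))"
proof -
  note k = assms(1) and l = assms(3) and p = assms(5,6)
  define h where "h = k div 2"
  define m where "m = k * d div 2"
  define L where "L = 2 * l"
  define N where "N = tuples n m"
  define P where "P = {\<sigma>. \<sigma> permutes {..<m}}"
  define c where "c = (1 / (fact m)\<^sup>2 :: real) ^ L"
  define EP where "EP = even_partitions d l"
  define G where "G Q = (if Q \<in> EP then p ^ card Q else 0)" for Q
  define F where "F T Is pis sigmas = (\<Prod>x\<in>idx d l. S_phi T (PA k Is pis x) (PB k l Is sigmas x))"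
    for T :: "nat list \<Rightarrow> real" and Is pis sigmas
  obtain L' where L': "L = Suc L'" using l by (cases L) (auto simp: L_def)
  have mh: "m = h * d" using m_eq[OF k] by (simp add: m_def h_def)
  have kh: "k = 2 * h" using k by (simp add: h_def)
  have fN: "finite N" by (simp add: N_def finite_tuples)
  have fP: "finite P" by (simp add: P_def finite_permutations)
  have fPN: "finite (PiE {..<L} (\<lambda>_. N))" by (intro finite_PiE fN) simp
  have fPP: "finite (PiE {..<L} (\<lambda>_. P))" by (intro finite_PiE fP) simp
  have int: "integrable (measure_pmf (kxor_pmf n k p)) f" for f :: "_ \<Rightarrow> real"
    by (rule integrable_measure_pmf_finite[OF finite_set_kxor])
  have c0: "0 \<le> c" by (simp add: c_def)
  have step1: "mat_trace N (mat_pow N (R_phi_d k d T) L) =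
      (\<Sum>Is\<in>PiE {..<L} (\<lambda>_. N). c * (\<Sum>pis\<in>PiE {..<L} (\<lambda>_. P). \<Sum>sigmas\<in>PiE {..<L} (\<lambda>_. P). F T Is pis sigmas))"
    for T
  proof -
    have "mat_trace N (mat_pow N (R_phi_d k d T) L) =
        (\<Sum>Is\<in>PiE {..<L} (\<lambda>_. N). \<Prod>j<L. R_phi_d k d T (Is j) (Is ((j + 1) mod L)))"
      unfolding L' by (rule trace_paths[OF fN])
    also have "\<dots> = (\<Sum>Is\<in>PiE {..<L} (\<lambda>_. N). c * (\<Sum>pis\<in>PiE {..<L} (\<lambda>_. P). \<Sum>sigmas\<in>PiE {..<L} (\<lambda>_. P). F T Is pis sigmas))"
      by (rule sum.cong[OF refl]) (unfold L_def c_def P_def m_def F_def, rule expand_R)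
    finally show ?thesis .
  qed
  have step3: "measure_pmf.expectation (kxor_pmf n k p) (\<lambda>T. F T Is pis sigmas) \<le> G (Par k d l Is pis sigmas)"
    if Is: "Is \<in> PiE {..<L} (\<lambda>_. N)" and pis: "pis \<in> PiE {..<L} (\<lambda>_. P)" and sig: "sigmas \<in> PiE {..<L} (\<lambda>_. P)"
    for Is pis sigmas
  proof -
    have AB: "PA k Is pis x \<in> tuples n h \<and> PB k l Is sigmas x \<in> tuples n h" if x: "x \<in> idx d l" for x
    proof -
      obtain j s where xs: "x = (j, s)" "j < L" "s < d" using x by (auto simp: idx_def L_def)
      have j': "(j + 1) mod L < L" using L' by simp
      have "Is j \<in> N" "pis j \<in> P" "Is ((j + 1) mod L) \<in> N" "sigmas j \<in> P"
        using PiE_mem[OF Is, of j] PiE_mem[OF pis, of j] PiE_mem[OF Is, of "(j + 1) mod L"] PiE_mem[OF sig, of j] xs(2) j'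
        by auto
      then have X1: "apply_perm (pis j) (Is j) \<in> tuples n m"
        and X2: "apply_perm (sigmas j) (Is ((j + 1) mod L)) \<in> tuples n m"
        by (simp_all add: N_def P_def apply_perm_tuples)
      have "PA k Is pis x = block h (apply_perm (pis j) (Is j)) s" by (simp add: PA_def xs h_def)
      moreover have "PB k l Is sigmas x = block h (apply_perm (sigmas j) (Is ((j + 1) mod L))) s"
        by (simp add: PB_def xs h_def L_def)
      ultimately show ?thesis using block_tuples[OF X1 mh xs(3)] block_tuples[OF X2 mh xs(3)] by simp
    qed
    have "measure_pmf.expectation (kxor_pmf n k p) (\<lambda>T. F T Is pis sigmas) \<le>
      (if \<forall>x\<in>idx d l. even (card {y\<in>idx d l. {PA k Is pis y, PB k l Is sigmas y} = {PA k Is pis x, PB k l Is sigmas x}})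
       then p ^ card ((\<lambda>x. {PA k Is pis x, PB k l Is sigmas x}) ` idx d l) else 0)"
      unfolding F_def by (rule E_S_bound[OF finite_idx AB p kh])
    also have "\<dots> = G (Par k d l Is pis sigmas)"
    proof -
      have pk: "pkey k l Is pis sigmas = (\<lambda>x. {PA k Is pis x, PB k l Is sigmas x})"
        by (rule ext) (simp add: pkey_def)
      show ?thesis by (simp only: G_def EP_def Par_even_iff Par_card pk)
    qed
    finally show ?thesis .
  qed
  have "measure_pmf.expectation (kxor_pmf n k p) (\<lambda>T. mat_trace N (mat_pow N (R_phi_d k d T) L))
      = (\<Sum>Is\<in>PiE {..<L} (\<lambda>_. N). c * (\<Sum>pis\<in>PiE {..<L} (\<lambda>_. P). \<Sum>sigmas\<in>PiE {..<L} (\<lambda>_. P).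
           measure_pmf.expectation (kxor_pmf n k p) (\<lambda>T. F T Is pis sigmas)))"
    proof -
      have "(\<lambda>T. mat_trace N (mat_pow N (R_phi_d k d T) L)) =
          (\<lambda>T. \<Sum>Is\<in>PiE {..<L} (\<lambda>_. N). c * (\<Sum>pis\<in>PiE {..<L} (\<lambda>_. P). \<Sum>sigmas\<in>PiE {..<L} (\<lambda>_. P). F T Is pis sigmas))"
        by (rule ext) (rule step1)
      then show ?thesis
        by (simp only: int integral_mult_right_zero Bochner_Integration.integral_sum)
    qed
  also have "\<dots> \<le> (\<Sum>Is\<in>PiE {..<L} (\<lambda>_. N). c * (\<Sum>pis\<in>PiE {..<L} (\<lambda>_. P). \<Sum>sigmas\<in>PiE {..<L} (\<lambda>_. P).
           G (Par k d l Is pis sigmas)))"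
    by (rule sum_mono, rule mult_left_mono[OF _ c0], rule sum_mono, rule sum_mono, rule step3; assumption)
  also have "\<dots> = c * (\<Sum>Is\<in>PiE {..<L} (\<lambda>_. N). \<Sum>pis\<in>PiE {..<L} (\<lambda>_. P). \<Sum>sigmas\<in>PiE {..<L} (\<lambda>_. P).
           G (Par k d l Is pis sigmas))"
    by (simp add: sum_distrib_left)
  also have "\<dots> = c * (fact m ^ L * (\<Sum>Is\<in>PiE {..<L} (\<lambda>_. N). \<Sum>\<tau>\<in>PiE {..<L} (\<lambda>_. P). G (Par k d l Is (\<lambda>_. id) \<tau>)))"
    unfolding L_def N_def P_def m_def by (simp only: reparam[OF l, of G k d n])
  also have "(\<Sum>Is\<in>PiE {..<L} (\<lambda>_. N). \<Sum>\<tau>\<in>PiE {..<L} (\<lambda>_. P). G (Par k d l Is (\<lambda>_. id) \<tau>))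
      = (\<Sum>Is\<in>PiE {..<L} (\<lambda>_. N). \<Sum>Q\<in>EP. p ^ card Q * card {\<tau>\<in>PiE {..<L} (\<lambda>_. P). Par k d l Is (\<lambda>_. id) \<tau> = Q})"
  proof (rule sum.cong[OF refl])
    fix Is
    show "(\<Sum>\<tau>\<in>PiE {..<L} (\<lambda>_. P). G (Par k d l Is (\<lambda>_. id) \<tau>)) =
      (\<Sum>Q\<in>EP. p ^ card Q * card {\<tau>\<in>PiE {..<L} (\<lambda>_. P). Par k d l Is (\<lambda>_. id) \<tau> = Q})"
      unfolding G_def
      by (rule group_Q[OF fPP, where par = "\<lambda>\<tau>. Par k d l Is (\<lambda>_. id) \<tau>" and f = "\<lambda>Q. p ^ card Q"])
        (simp add: EP_def finite_even_partitions)
  qed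
  also have "\<dots> = (\<Sum>Q\<in>EP. p ^ card Q * (\<Sum>Is\<in>PiE {..<L} (\<lambda>_. N). real (card {\<tau>\<in>PiE {..<L} (\<lambda>_. P). Par k d l Is (\<lambda>_. id) \<tau> = Q})))"
    unfolding sum_distrib_left by (rule sum.swap)
  also have "c * (fact m ^ L * (\<Sum>Q\<in>EP. p ^ card Q * (\<Sum>Is\<in>PiE {..<L} (\<lambda>_. N). real (card {\<tau>\<in>PiE {..<L} (\<lambda>_. P). Par k d l Is (\<lambda>_. id) \<tau> = Q})))) \<le> c * (fact m ^ L * (\<Sum>Q\<in>EP. p ^ card Q * ((real m ^ h) ^ card Q *
      (\<Sum>Is\<in>{Is \<in> PiE {..<L} (\<lambda>_. N). Q_valid k d l Q Is}. \<Prod>j<L. hist_fact n (Is j)))))"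
  proof -
  have AB: "(\<Sum>Q\<in>EP. p ^ card Q * (\<Sum>Is\<in>PiE {..<L} (\<lambda>_. N). real (card {\<tau>\<in>PiE {..<L} (\<lambda>_. P). Par k d l Is (\<lambda>_. id) \<tau> = Q}))) \<le> (\<Sum>Q\<in>EP. p ^ card Q * ((real m ^ h) ^ card Q *
      (\<Sum>Is\<in>{Is \<in> PiE {..<L} (\<lambda>_. N). Q_valid k d l Q Is}. \<Prod>j<L. hist_fact n (Is j))))"
  proof (intro sum_mono mult_left_mono)
    fix Q assume "Q \<in> EP"
    show "0 \<le> p ^ card Q" using p by simp
    have "(\<Sum>Is\<in>PiE {..<L} (\<lambda>_. N). real (card {\<tau>\<in>PiE {..<L} (\<lambda>_. P). Par k d l Is (\<lambda>_. id) \<tau> = Q}))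
        = (\<Sum>Is\<in>PiE {..<L} (\<lambda>_. N). if Q_valid k d l Q Is then real (card {\<tau>\<in>PiE {..<L} (\<lambda>_. P). Par k d l Is (\<lambda>_. id) \<tau> = Q}) else 0)"
    proof (rule sum.cong[OF refl])
      fix Is
      have empty: "{\<tau>\<in>PiE {..<L} (\<lambda>_. P). Par k d l Is (\<lambda>_. id) \<tau> = Q} = {}" if "\<not> Q_valid k d l Q Is"
      proof (rule ccontr)
        assume "{\<tau>\<in>PiE {..<L} (\<lambda>_. P). Par k d l Is (\<lambda>_. id) \<tau> = Q} \<noteq> {}"
        then obtain \<tau> where t: "\<tau> \<in> PiE {..<L} (\<lambda>_. P)" "Par k d l Is (\<lambda>_. id) \<tau> = Q" by blast
        have "\<forall>j<2 * l. \<tau> j permutes {..<k * d div 2}"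
          using PiE_mem[OF t(1)] by (simp add: P_def L_def m_def)
        then have "Q_valid k d l Q Is" unfolding Q_valid_def using t(2) by blast
        then show False using that by blast
      qed
      show "real (card {\<tau>\<in>PiE {..<L} (\<lambda>_. P). Par k d l Is (\<lambda>_. id) \<tau> = Q})
        = (if Q_valid k d l Q Is then real (card {\<tau>\<in>PiE {..<L} (\<lambda>_. P). Par k d l Is (\<lambda>_. id) \<tau> = Q}) else 0)"
      proof (cases "Q_valid k d l Q Is")
        case True then show ?thesis by simp
      next
        case False
        show ?thesis by (simp only: empty[OF False] card.empty of_nat_0 False if_False)
      qed
    qed
    also have "\<dots> = (\<Sum>Is\<in>{Is \<in> PiE {..<L} (\<lambda>_. N). Q_valid k d l Q Is}. real (card {\<tau>\<in>PiE {..<L} (\<lambda>_. P). Par k d l Is (\<lambda>_. id) \<tau> = Q}))"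
      by (rule sum.inter_filter[symmetric, OF fPN])
    also have "\<dots> \<le> (\<Sum>Is\<in>{Is \<in> PiE {..<L} (\<lambda>_. N). Q_valid k d l Q Is}. (real m ^ h) ^ card Q * (\<Prod>j<L. hist_fact n (Is j)))"
    proof (rule sum_mono)
      fix Is assume "Is \<in> {Is \<in> PiE {..<L} (\<lambda>_. N). Q_valid k d l Q Is}"
      then have "Is \<in> PiE {..<2*l} (\<lambda>_. tuples n (k*d div 2))" by (simp add: L_def N_def m_def)
      from count_tau[OF k l this, of Q]
      show "real (card {\<tau>\<in>PiE {..<L} (\<lambda>_. P). Par k d l Is (\<lambda>_. id) \<tau> = Q}) \<le> (real m ^ h) ^ card Q * (\<Prod>j<L. hist_fact n (Is j))"
        by (simp add: L_def P_def m_def h_def)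
    qed
    also have "\<dots> = (real m ^ h) ^ card Q * (\<Sum>Is\<in>{Is \<in> PiE {..<L} (\<lambda>_. N). Q_valid k d l Q Is}. \<Prod>j<L. hist_fact n (Is j))"
      by (simp add: sum_distrib_left)
    finally show "(\<Sum>Is\<in>PiE {..<L} (\<lambda>_. N). real (card {\<tau>\<in>PiE {..<L} (\<lambda>_. P). Par k d l Is (\<lambda>_. id) \<tau> = Q}))
      \<le> (real m ^ h) ^ card Q * (\<Sum>Is\<in>{Is \<in> PiE {..<L} (\<lambda>_. N). Q_valid k d l Q Is}. \<Prod>j<L. hist_fact n (Is j))" .
  qed
  show ?thesis by (rule mult_left_mono[OF mult_left_mono[OF AB] c0]) simp
  qed
  finally have main: "measure_pmf.expectation (kxor_pmf n k p) (\<lambda>T. mat_trace N (mat_pow N (R_phi_d k d T) L))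
     \<le> c * (fact m ^ L * (\<Sum>Q\<in>EP. p ^ card Q * ((real m ^ h) ^ card Q *
      (\<Sum>Is\<in>{Is \<in> PiE {..<L} (\<lambda>_. N). Q_valid k d l Q Is}. \<Prod>j<L. hist_fact n (Is j)))))"
    .
  have cf: "c * fact m ^ L = 1 / fact m ^ L"
  proof -
    have pos: "0 < (fact m :: real) ^ L" by simp
    have "c = 1 / ((fact m) ^ L)\<^sup>2" by (simp add: c_def power_one_over power_mult[symmetric] mult.commute)
    then show ?thesis using pos by (simp add: power2_eq_square)
  qed
  have main': "measure_pmf.expectation (kxor_pmf n k p) (\<lambda>T. mat_trace N (mat_pow N (R_phi_d k d T) L))
     \<le> 1 / fact m ^ L * (\<Sum>Q\<in>EP. p ^ card Q * ((real m ^ h) ^ card Q *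
      (\<Sum>Is\<in>{Is \<in> PiE {..<L} (\<lambda>_. N). Q_valid k d l Q Is}. \<Prod>j<L. hist_fact n (Is j))))"
    using main by (simp only: mult.assoc[symmetric] cf)
  have "(\<Sum>Q\<in>EP. p ^ card Q * ((real m ^ h) ^ card Q *
      (\<Sum>Is\<in>{Is \<in> PiE {..<L} (\<lambda>_. N). Q_valid k d l Q Is}. \<Prod>j<L. hist_fact n (Is j))))
    = (\<Sum>Q\<in>even_partitions d l.
              (p * real (k * d div 2) ^ (k div 2)) ^ card Q *
              (\<Sum>Is\<in>{Is \<in> PiE {..<2 * l} (\<lambda>_. tuples n (k * d div 2)). Q_valid k d l Q Is}.
                 \<Prod>j<2 * l. hist_fact n (Is j)))"
    unfolding EP_def L_def N_def m_def h_def by (rule sum.cong[OF refl]) (simp only: power_mult_distrib mult.assoc)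
  then show ?thesis using main' by (simp only: L_def N_def m_def)
qed
end
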